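(* Let $G$ be a group acting geometrically on a systolic complex $X$ and let $h\in G$ be a hyperbolic isometry. Let $K\ge L(h)$ be an integer. Then there exists $C>0$ such that for all integers $K'$ with $L(h)\le K'\le K$ we have $\mathrm{Disp}_K(h)\subset B_C(\mathrm{Disp}_{K'}(h),X)$.
   Context: $X$ is a systolic complex (simply connected simplicial complex with flag, $6$-large vertex links, where $6$-large means every embedded cycle of length $4$ or $5$ has a diagonal), with the combinatorial metric $d$ on vertices. The action is geometric: by simplicial automorphisms, with finite vertex stabilisers, and cocompact. An isometry (simplicial automorphism) $h$ is hyperbolic if it fixes no simplex of $X$. $L(h)=\min_x d(x,h x)$ over vertices $x$ (the translation length). For an integer $K\ge L(h)$, $\mathrm{Disp}_K(h)$ is the subcomplex spanned by all vertices $x$ with $d(x,hx)\le K$. For a subcomplex $A$, $B_C(A,X)$ is the union over vertices $v\in A$ of the balls $B_C(v,X)$, where $B_C(v,X)$ is the subcomplex spanned by vertices at distance $\le C$ from $v$. *)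

theory Defs
  imports "HOL-Algebra.Group_Action"
begin

definition simplicial_complex :: "'v set set \<Rightarrow> bool" where
  "simplicial_complex S \<longleftrightarrow>
     (\<forall>s\<in>S. finite s \<and> s \<noteq> {}) \<and> (\<forall>s\<in>S. \<forall>t. t \<subseteq> s \<and> t \<noteq> {} \<longrightarrow> t \<in> S)"

definition verts :: "'v set set \<Rightarrow> 'v set" where
  "verts S = {v. {v} \<in> S}"

definition adj :: "'v set set \<Rightarrow> 'v \<Rightarrow> 'v \<Rightarrow> bool" where
  "adj S u v \<longleftrightarrow> u \<noteq> v \<and> {u, v} \<in> S"

definition flag :: "'v set set \<Rightarrow> bool" where
  "flag S \<longleftrightarrow> (\<forall>s. finite s \<and> s \<noteq> {} \<and> s \<subseteq> verts S \<and>
       (\<forall>u\<in>s. \<forall>v\<in>s. u \<noteq> v \<longrightarrow> {u, v} \<in> S) \<longrightarrow> s \<in> S)"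

definition link :: "'v set set \<Rightarrow> 'v \<Rightarrow> 'v set set" where
  "link S v = {s. v \<notin> s \<and> s \<noteq> {} \<and> insert v s \<in> S}"

definition six_large :: "'v set set \<Rightarrow> bool" where
  "six_large S \<longleftrightarrow> (\<forall>n::nat. \<forall>c::nat \<Rightarrow> 'v. (n = 4 \<or> n = 5) \<and>
       inj_on c {..<n} \<and> (\<forall>i<n. adj S (c i) (c (Suc i mod n))) \<longrightarrow>
       (\<exists>i<n. \<exists>j<n. i \<noteq> j \<and> j \<noteq> Suc i mod n \<and> i \<noteq> Suc j mod n \<and> adj S (c i) (c j)))"

definition edge_path :: "'v set set \<Rightarrow> 'v list \<Rightarrow> bool" where
  "edge_path S p \<longleftrightarrow> p \<noteq> [] \<and> set p \<subseteq> verts S \<and>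
     (\<forall>i. Suc i < length p \<longrightarrow> {p ! i, p ! Suc i} \<in> S)"

inductive elem_move :: "'v set set \<Rightarrow> 'v list \<Rightarrow> 'v list \<Rightarrow> bool" for S where
  tri: "{a, b, c} \<in> S \<Longrightarrow> elem_move S (xs @ [a, b, c] @ ys) (xs @ [a, c] @ ys)"
| stutter: "{a} \<in> S \<Longrightarrow> elem_move S (xs @ [a, a] @ ys) (xs @ [a] @ ys)"

definition path_homotopic :: "'v set set \<Rightarrow> 'v list \<Rightarrow> 'v list \<Rightarrow> bool" where
  "path_homotopic S = (\<lambda>p q. (p, q) \<in> ({(x, y). elem_move S x y} \<union> {(x, y). elem_move S y x})\<^sup>*)"

definition connected_complex :: "'v set set \<Rightarrow> bool" where
  "connected_complex S \<longleftrightarrow> verts S \<noteq> {} \<and>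
     (\<forall>u\<in>verts S. \<forall>v\<in>verts S. \<exists>p. edge_path S p \<and> hd p = u \<and> last p = v)"

definition simply_connected_complex :: "'v set set \<Rightarrow> bool" where
  "simply_connected_complex S \<longleftrightarrow> connected_complex S \<and>
     (\<forall>p. edge_path S p \<and> hd p = last p \<longrightarrow> path_homotopic S p [hd p])"

definition systolic :: "'v set set \<Rightarrow> bool" where
  "systolic S \<longleftrightarrow> simplicial_complex S \<and> simply_connected_complex S \<and> flag S \<and>
     (\<forall>v\<in>verts S. flag (link S v) \<and> six_large (link S v))"

definition cdist :: "'v set set \<Rightarrow> 'v \<Rightarrow> 'v \<Rightarrow> nat" where
  "cdist S u v = (LEAST n. \<exists>p. edge_path S p \<and> hd p = u \<and> last p = v \<and> length p = Suc n)"

definition geometric_action :: "('g, 'b) monoid_scheme \<Rightarrow> ('g \<Rightarrow> 'v \<Rightarrow> 'v) \<Rightarrow> 'v set set \<Rightarrow> bool" where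
  "geometric_action G \<phi> S \<longleftrightarrow> group G \<and> group_action G (verts S) \<phi> \<and>
     (\<forall>g\<in>carrier G. \<forall>s. s \<subseteq> verts S \<longrightarrow> (s \<in> S \<longleftrightarrow> \<phi> g ` s \<in> S)) \<and>
     (\<forall>v\<in>verts S. finite {g\<in>carrier G. \<phi> g v = v}) \<and>
     (\<exists>F. finite F \<and> F \<subseteq> S \<and> (\<forall>s\<in>S. \<exists>g\<in>carrier G. \<exists>t\<in>F. s = \<phi> g ` t))"

definition hyperbolic :: "'v set set \<Rightarrow> ('v \<Rightarrow> 'v) \<Rightarrow> bool" where
  "hyperbolic S h \<longleftrightarrow> (\<forall>s\<in>S. h ` s \<noteq> s)"

definition transl_length :: "'v set set \<Rightarrow> ('v \<Rightarrow> 'v) \<Rightarrow> nat" where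
  "transl_length S h = (LEAST n. \<exists>x\<in>verts S. cdist S x (h x) = n)"

definition span :: "'v set set \<Rightarrow> 'v set \<Rightarrow> 'v set set" where
  "span S V = {s\<in>S. s \<subseteq> V}"

definition Disp :: "'v set set \<Rightarrow> nat \<Rightarrow> ('v \<Rightarrow> 'v) \<Rightarrow> 'v set set" where
  "Disp S K h = span S {x\<in>verts S. cdist S x (h x) \<le> K}"

definition cball :: "'v set set \<Rightarrow> nat \<Rightarrow> 'v \<Rightarrow> 'v set set" where
  "cball S C v = span S {y\<in>verts S. cdist S v y \<le> C}"

definition nbhd :: "'v set set \<Rightarrow> nat \<Rightarrow> 'v set set \<Rightarrow> 'v set set" where
  "nbhd S C A = (\<Union>v\<in>\<Union>A. cball S C v)"

end

theory Submission
  imports Defs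
begin

locale geo = group G for G :: "('g, 'b) monoid_scheme" (structure) +
  fixes \<phi> :: "'g \<Rightarrow> 'v \<Rightarrow> 'v" and S :: "'v set set" and F
  assumes sc: "simplicial_complex S"
    and cc: "connected_complex S"
    and ga: "group_action G (verts S) \<phi>"
    and simp_inv: "\<And>g s. g \<in> carrier G \<Longrightarrow> s \<subseteq> verts S \<Longrightarrow> (s \<in> S \<longleftrightarrow> \<phi> g ` s \<in> S)"
    and stabfin: "\<And>v. v \<in> verts S \<Longrightarrow> finite {g\<in>carrier G. \<phi> g v = v}"
    and Ffin: "finite F" and FS: "F \<subseteq> S" and Fcov: "\<And>s. s \<in> S \<Longrightarrow> \<exists>g\<in>carrier G. \<exists>t\<in>F. s = \<phi> g ` t"
begin

lemma grp: "group G" by (rule is_group)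

lemma sub_in: "s \<in> S \<Longrightarrow> t \<subseteq> s \<Longrightarrow> t \<noteq> {} \<Longrightarrow> t \<in> S"
  using sc unfolding simplicial_complex_def by blast

lemma in_verts: "s \<in> S \<Longrightarrow> x \<in> s \<Longrightarrow> x \<in> verts S"
  unfolding verts_def by (rule CollectI, rule sub_in) auto

lemma pair_in: "s \<in> S \<Longrightarrow> x \<in> s \<Longrightarrow> y \<in> s \<Longrightarrow> {x, y} \<in> S"
  by (rule sub_in) auto

lemma cdist_le:
  assumes "edge_path S p" "hd p = u" "last p = v"
  shows "cdist S u v \<le> length p - 1"
proof -
  have "length p = Suc (length p - 1)" using assms(1) unfolding edge_path_def by (cases p) auto
  then show ?thesis unfolding cdist_def using assms by (metis (mono_tags, lifting) Least_le)
qed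

lemma cdist_ex:
  assumes "u \<in> verts S" "v \<in> verts S"
  shows "\<exists>p. edge_path S p \<and> hd p = u \<and> last p = v \<and> length p = Suc (cdist S u v)"
proof -
  obtain p where p: "edge_path S p" "hd p = u" "last p = v"
    using cc assms unfolding connected_complex_def by blast
  then have "length p = Suc (length p - 1)" unfolding edge_path_def by (cases p) auto
  with p have "\<exists>n. \<exists>p. edge_path S p \<and> hd p = u \<and> last p = v \<and> length p = Suc n" by blast
  then show ?thesis unfolding cdist_def by (rule LeastI_ex)
qed

lemma act_V: "g \<in> carrier G \<Longrightarrow> x \<in> verts S \<Longrightarrow> \<phi> g x \<in> verts S"
  using group_action.element_image[OF ga] by blast

lemma comp: "g1 \<in> carrier G \<Longrightarrow> g2 \<in> carrier G \<Longrightarrow> x \<in> verts S \<Longrightarrow> \<phi> (g1 \<otimes>\<^bsub>G\<^esub> g2) x = \<phi> g1 (\<phi> g2 x)"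
  using group_action.composition_rule[OF ga] by blast

lemma one_act: "x \<in> verts S \<Longrightarrow> \<phi> \<one>\<^bsub>G\<^esub> x = x"
proof -
  assume x: "x \<in> verts S"
  have "\<phi> \<one>\<^bsub>G\<^esub> x = (\<lambda>x \<in> verts S. x) x" using group_action.id_eq_one[OF ga] by simp
  then show ?thesis using x by simp
qed

lemma inv_act: "g \<in> carrier G \<Longrightarrow> x \<in> verts S \<Longrightarrow> \<phi> (inv\<^bsub>G\<^esub> g) (\<phi> g x) = x"
proof -
  assume g: "g \<in> carrier G" and x: "x \<in> verts S"
  have "\<phi> (inv\<^bsub>G\<^esub> g) (\<phi> g x) = \<phi> (inv\<^bsub>G\<^esub> g \<otimes>\<^bsub>G\<^esub> g) x" using comp[OF inv_closed[OF g] g x] by simp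
  also have "\<dots> = x" using g one_act[OF x] by simp
  finally show ?thesis .
qed

lemma map_path: "g \<in> carrier G \<Longrightarrow> edge_path S p \<Longrightarrow> edge_path S (map (\<phi> g) p)"
proof -
  assume g: "g \<in> carrier G" and p: "edge_path S p"
  have "{p ! i, p ! Suc i} \<in> S \<Longrightarrow> Suc i < length p \<Longrightarrow> {\<phi> g (p ! i), \<phi> g (p ! Suc i)} \<in> S" for i
  proof -
    assume a: "{p ! i, p ! Suc i} \<in> S" "Suc i < length p"
    have "{p ! i, p ! Suc i} \<subseteq> verts S" using a p unfolding edge_path_def
      by (metis Suc_lessD empty_subsetI insert_subset nth_mem subset_code(1))
    then have "\<phi> g ` {p ! i, p ! Suc i} \<in> S" using simp_inv[OF g] a by blast
    then show ?thesis by simp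
  qed
  then show ?thesis using p act_V[OF g] unfolding edge_path_def by auto
qed

lemma cdist_act_le:
  assumes g: "g \<in> carrier G" and "u \<in> verts S" "v \<in> verts S"
  shows "cdist S (\<phi> g u) (\<phi> g v) \<le> cdist S u v"
proof -
  obtain p where p: "edge_path S p" "hd p = u" "last p = v" "length p = Suc (cdist S u v)"
    using cdist_ex assms by blast
  have ne: "p \<noteq> []" using p unfolding edge_path_def by auto
  have "cdist S (\<phi> g u) (\<phi> g v) \<le> length (map (\<phi> g) p) - 1"
    by (rule cdist_le[OF map_path[OF g p(1)]]) (use ne p in \<open>auto simp: hd_map last_map\<close>)
  then show ?thesis using p by simp
qed

lemma cdist_act:
  assumes g: "g \<in> carrier G" and "u \<in> verts S" "v \<in> verts S"
  shows "cdist S (\<phi> g u) (\<phi> g v) = cdist S u v"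
proof -
  have "cdist S (\<phi> (inv\<^bsub>G\<^esub> g) (\<phi> g u)) (\<phi> (inv\<^bsub>G\<^esub> g) (\<phi> g v)) \<le> cdist S (\<phi> g u) (\<phi> g v)"
    by (rule cdist_act_le) (use assms grp act_V in auto)
  then show ?thesis using cdist_act_le[OF assms] inv_act assms by simp
qed

lemma fiber_fin:
  assumes a: "a \<in> verts S"
  shows "finite {k\<in>carrier G. \<phi> k a = w}"
proof (cases "{k\<in>carrier G. \<phi> k a = w} = {}")
  case True then show ?thesis by (metis finite.emptyI)
next
  case False
  then obtain k1 where k1: "k1 \<in> carrier G" "\<phi> k1 a = w" by blast
  have "{k\<in>carrier G. \<phi> k a = w} \<subseteq> (\<lambda>x. k1 \<otimes>\<^bsub>G\<^esub> x) ` {g\<in>carrier G. \<phi> g a = a}"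
  proof
    fix k assume k: "k \<in> {k\<in>carrier G. \<phi> k a = w}"
    define x where "x = inv\<^bsub>G\<^esub> k1 \<otimes>\<^bsub>G\<^esub> k"
    have xc: "x \<in> carrier G" using k k1 grp unfolding x_def by (simp add: monoid.m_closed group.is_monoid group.inv_closed)
    have "\<phi> x a = \<phi> (inv\<^bsub>G\<^esub> k1) (\<phi> k a)" unfolding x_def using comp k k1 grp a by auto
    also have "\<dots> = a" using k k1 inv_act a by auto
    finally have "\<phi> x a = a" .
    moreover have "k = k1 \<otimes>\<^bsub>G\<^esub> x" unfolding x_def using k k1
      by (simp add: m_assoc[symmetric])
    ultimately show "k \<in> (\<lambda>x. k1 \<otimes>\<^bsub>G\<^esub> x) ` {g\<in>carrier G. \<phi> g a = a}" using xc by blast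
  qed
  moreover have "finite ((\<lambda>x. k1 \<otimes>\<^bsub>G\<^esub> x) ` {g\<in>carrier G. \<phi> g a = a})"
    using stabfin[OF a] by (rule finite_imageI)
  ultimately show ?thesis by (rule finite_subset)
qed


definition nb where "nb u = {w. {u, w} \<in> S}"

lemma nb_fin: assumes u: "u \<in> verts S" shows "finite (nb u)"
proof -
  have "nb u \<subseteq> (\<Union>t\<in>F. \<Union>b\<in>t. \<Union>c\<in>t. (\<lambda>g. \<phi> g c) ` {g\<in>carrier G. \<phi> g b = u})"
  proof
    fix w assume "w \<in> nb u"
    then have "{u, w} \<in> S" unfolding nb_def by simp
    then obtain g t where g: "g \<in> carrier G" "t \<in> F" "{u, w} = \<phi> g ` t" using Fcov by blast
    then obtain b c where "b \<in> t" "c \<in> t" "u = \<phi> g b" "w = \<phi> g c"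
      by (metis imageE insertI1 insertI2 singletonI)
    then show "w \<in> (\<Union>t\<in>F. \<Union>b\<in>t. \<Union>c\<in>t. (\<lambda>g. \<phi> g c) ` {g\<in>carrier G. \<phi> g b = u})"
      using g by blast
  qed
  moreover have "finite (\<Union>t\<in>F. \<Union>b\<in>t. \<Union>c\<in>t. (\<lambda>g. \<phi> g c) ` {g\<in>carrier G. \<phi> g b = u})"
  proof (rule finite_UN_I[OF Ffin])
    fix t assume t: "t \<in> F"
    then have ts: "t \<in> S" using FS by blast
    then have "finite t" using sc unfolding simplicial_complex_def by simp
    moreover have "b \<in> t \<Longrightarrow> b \<in> verts S" for b using in_verts ts by blast
    ultimately show "finite (\<Union>b\<in>t. \<Union>c\<in>t. (\<lambda>g. \<phi> g c) ` {g\<in>carrier G. \<phi> g b = u})"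
      by (intro finite_UN_I finite_imageI fiber_fin) simp_all
  qed
  ultimately show ?thesis by (rule finite_subset)
qed

definition B where "B a n = {last p | p. edge_path S p \<and> hd p = a \<and> length p \<le> Suc n}"

lemma B_verts: "B a n \<subseteq> verts S"
  unfolding B_def edge_path_def by auto

lemma butlast_path:
  assumes p: "edge_path S p" and l: "length p \<ge> 2"
  shows "edge_path S (butlast p) \<and> hd (butlast p) = hd p \<and> {last (butlast p), last p} \<in> S"
proof -
  have ne: "butlast p \<noteq> []" using l by (cases p) auto
  have "set (butlast p) \<subseteq> verts S" using p unfolding edge_path_def by (meson in_set_butlastD subset_iff)
  moreover have "\<forall>i. Suc i < length (butlast p) \<longrightarrow> {butlast p ! i, butlast p ! Suc i} \<in> S"
    using p unfolding edge_path_def by (simp add: nth_butlast)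
  moreover have "hd (butlast p) = hd p" using l by (cases p) auto
  moreover have "{last (butlast p), last p} \<in> S"
  proof -
    define m where "m = length p - 2"
    have m: "length p = Suc (Suc m)" using l unfolding m_def by simp
    have pne: "p \<noteq> []" using m by auto
    have "last (butlast p) = butlast p ! m" using ne m by (simp add: last_conv_nth)
    also have "\<dots> = p ! m" using m by (simp add: nth_butlast)
    finally have 1: "last (butlast p) = p ! m" .
    have 2: "last p = p ! Suc m" using pne m by (simp add: last_conv_nth)
    have "Suc m < length p" using m by simp
    then have "{p ! m, p ! Suc m} \<in> S" using p unfolding edge_path_def by blast
    then show ?thesis using 1 2 by simp
  qed
  ultimately show ?thesis using ne unfolding edge_path_def by blast
qed

lemma B_fin: "finite (B a n)"
proof (induction n)
  case 0
  have "B a 0 \<subseteq> {a}"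
  proof
    fix x assume "x \<in> B a 0"
    then obtain p where "edge_path S p" "hd p = a" "length p \<le> 1" "x = last p" unfolding B_def by auto
    then show "x \<in> {a}" unfolding edge_path_def by (cases p) auto
  qed
  then show ?case by (rule finite_subset) simp
next
  case (Suc n)
  have "B a (Suc n) \<subseteq> B a n \<union> (\<Union>u\<in>B a n. nb u)"
  proof
    fix x assume "x \<in> B a (Suc n)"
    then obtain p where p: "edge_path S p" "hd p = a" "length p \<le> Suc (Suc n)" "x = last p" unfolding B_def by auto
    show "x \<in> B a n \<union> (\<Union>u\<in>B a n. nb u)"
    proof (cases "length p \<le> Suc n")
      case True then show ?thesis using p unfolding B_def by blast
    next
      case False
      then have l: "length p \<ge> 2" by simp
      have bl: "length (butlast p) \<le> Suc n" using p(3) by simp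
      from butlast_path[OF p(1) l] have "last (butlast p) \<in> B a n" using p bl unfolding B_def
        by (intro CollectI exI[of _ "butlast p"]) auto
      moreover have "x \<in> nb (last (butlast p))" using butlast_path[OF p(1) l] p unfolding nb_def by simp
      ultimately show ?thesis by blast
    qed
  qed
  moreover have "finite (\<Union>u\<in>B a n. nb u)"
    using Suc by (rule finite_UN_I) (use nb_fin B_verts in blast)
  ultimately show ?case using Suc by (meson finite_UnI finite_subset)
qed

lemma path_snoc:
  assumes p: "edge_path S p" and "{last p, y} \<in> S" and "y \<in> verts S"
  shows "edge_path S (p @ [y])"
proof -
  have ne: "p \<noteq> []" using p unfolding edge_path_def by auto
  have "{(p @ [y]) ! i, (p @ [y]) ! Suc i} \<in> S" if i: "Suc i < length (p @ [y])" for i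
  proof (cases "Suc i < length p")
    case True then show ?thesis using p unfolding edge_path_def by (simp add: nth_append)
  next
    case False
    then have "i = length p - 1" "Suc i = length p" using i ne by auto
    then show ?thesis using assms ne by (simp add: nth_append last_conv_nth)
  qed
  then show ?thesis using p assms(3) unfolding edge_path_def by auto
qed

lemma main:
  assumes hG: "h \<in> carrier G"
  shows "\<exists>C::nat. C > 0 \<and> (\<forall>K'::nat. transl_length S (\<phi> h) \<le> K' \<and> K' \<le> K \<longrightarrow>
           Disp S K (\<phi> h) \<subseteq> nbhd S C (Disp S K' (\<phi> h)))"
proof -
  define L where "L = transl_length S (\<phi> h)"
  have Vne: "verts S \<noteq> {}" using cc unfolding connected_complex_def by blast
  then obtain x1 where "x1 \<in> verts S" by blast
  then have "\<exists>n. \<exists>x\<in>verts S. cdist S x (\<phi> h x) = n" by blast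
  then have "\<exists>x\<in>verts S. cdist S x (\<phi> h x) = L" unfolding L_def transl_length_def by (rule LeastI_ex)
  then obtain y0 where y0: "y0 \<in> verts S" "cdist S y0 (\<phi> h y0) = L" by blast
  define R where "R = {a. {a} \<in> F}"
  have Rfin: "finite R" 
  proof (rule finite_subset)
    show "R \<subseteq> \<Union>F" unfolding R_def by blast
    show "finite (\<Union>F)" using Ffin by (rule finite_Union) (use FS sc in \<open>auto simp: simplicial_complex_def\<close>)
  qed
  have RV: "R \<subseteq> verts S" unfolding R_def verts_def using FS by blast
  define P where "P = {k\<in>carrier G. \<exists>a\<in>R. cdist S a (\<phi> k a) \<le> K}"
  have "P \<subseteq> (\<Union>a\<in>R. \<Union>w\<in>B a K. {k\<in>carrier G. \<phi> k a = w})"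
  proof
    fix k assume "k \<in> P"
    then obtain a where a: "k \<in> carrier G" "a \<in> R" "cdist S a (\<phi> k a) \<le> K" unfolding P_def by blast
    have aV: "a \<in> verts S" using a RV by blast
    obtain p where p: "edge_path S p" "hd p = a" "last p = \<phi> k a" "length p = Suc (cdist S a (\<phi> k a))"
      using cdist_ex[OF aV act_V[OF a(1) aV]] by blast
    have "\<phi> k a \<in> B a K" unfolding B_def using p a(3) by (intro CollectI exI[of _ p]) auto
    then show "k \<in> (\<Union>a\<in>R. \<Union>w\<in>B a K. {k\<in>carrier G. \<phi> k a = w})" using a by blast
  qed
  moreover have "finite (\<Union>a\<in>R. \<Union>w\<in>B a K. {k\<in>carrier G. \<phi> k a = w})"
    using Rfin by (intro finite_UN_I B_fin fiber_fin) (use RV in auto)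
  ultimately have Pfin: "finite P" by (rule finite_subset)
  define gr where "gr k = (SOME g. g \<in> carrier G \<and> inv g \<otimes> h \<otimes> g = k)" for k
  define C0 where "C0 = Max ((\<lambda>(k, a). cdist S y0 (\<phi> (gr k) a)) ` (P \<times> R) \<union> {0})"
  have C0fin: "finite ((\<lambda>(k, a). cdist S y0 (\<phi> (gr k) a)) ` (P \<times> R) \<union> {0})" using Pfin Rfin by simp
  have C0: "k \<in> P \<Longrightarrow> a \<in> R \<Longrightarrow> cdist S y0 (\<phi> (gr k) a) \<le> C0" for k a
    unfolding C0_def using C0fin by (intro Max_ge) auto
  have key: "\<exists>v. v \<in> \<Union>(Disp S K' (\<phi> h)) \<and> s \<in> cball S (C0 + 1) v"
    if s: "s \<in> Disp S K (\<phi> h)" and K': "L \<le> K'" for s K'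
  proof -
    have sS: "s \<in> S" and sD: "s \<subseteq> {x\<in>verts S. cdist S x (\<phi> h x) \<le> K}"
      using s unfolding Disp_def span_def by auto
    have "s \<noteq> {}" using sS sc unfolding simplicial_complex_def by blast
    then obtain x where xs: "x \<in> s" by blast
    have xV: "x \<in> verts S" and xK: "cdist S x (\<phi> h x) \<le> K" using xs sD by auto
    have "{x} \<in> S" using xV unfolding verts_def by simp
    then obtain g t where g: "g \<in> carrier G" "t \<in> F" "{x} = \<phi> g ` t" using Fcov by blast
    have tV: "t \<subseteq> verts S" using g(2) FS in_verts by blast
    obtain a where at: "a \<in> t" and xa: "x = \<phi> g a" using g(3) by (metis imageE singletonI)
    have "t = {a}"
    proof -
      have "b = a" if b: "b \<in> t" for b
      proof -
        have "\<phi> g b \<in> {x}" using g(3) b by blast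
        then have "\<phi> g b = \<phi> g a" using xa by simp
        moreover have "b \<in> verts S" "a \<in> verts S" using b at tV by auto
        ultimately show ?thesis using inj_onD[OF group_action.inj_prop[OF ga g(1)]] by blast
      qed
      then show ?thesis using at by blast
    qed
    then have aR: "a \<in> R" using g(2) unfolding R_def by simp
    have aV: "a \<in> verts S" using aR RV by blast
    define k where "k = inv g \<otimes> h \<otimes> g"
    have kG: "k \<in> carrier G" unfolding k_def using g hG by simp
    have hxV: "\<phi> h x \<in> verts S" using act_V hG xV by blast
    have "\<phi> k a = \<phi> (inv g) (\<phi> h x)" unfolding k_def using g hG aV xa
      by (simp add: comp act_V)
    moreover have "a = \<phi> (inv g) x" using xa inv_act g aV by simp
    ultimately have "cdist S a (\<phi> k a) = cdist S x (\<phi> h x)"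
      using cdist_act[OF inv_closed[OF g(1)] xV hxV] by simp
    then have kP: "k \<in> P" unfolding P_def using kG aR xK by (metis (mono_tags, lifting) mem_Collect_eq)
    have "\<exists>g. g \<in> carrier G \<and> inv g \<otimes> h \<otimes> g = k" using g k_def by blast
    then have gk: "gr k \<in> carrier G" "inv (gr k) \<otimes> h \<otimes> gr k = k" unfolding gr_def
      by (metis (mono_tags, lifting) someI_ex)+
    define z where "z = g \<otimes> inv (gr k)"
    have zG: "z \<in> carrier G" unfolding z_def using g gk by simp
    have "h \<otimes> z = g \<otimes> (inv g \<otimes> h \<otimes> g) \<otimes> inv (gr k)"
      unfolding z_def using g hG gk by (simp add: m_assoc[symmetric])
    also have "\<dots> = g \<otimes> (inv (gr k) \<otimes> h \<otimes> gr k) \<otimes> inv (gr k)" using gk k_def by simp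
    also have "\<dots> = z \<otimes> h" unfolding z_def using g hG gk(1) by (simp add: m_assoc)
    finally have zh: "h \<otimes> z = z \<otimes> h" .
    define v where "v = \<phi> z y0"
    have vV: "v \<in> verts S" unfolding v_def using act_V zG y0 by blast
    have "\<phi> h v = \<phi> (h \<otimes> z) y0" unfolding v_def using comp[OF hG zG y0(1)] by simp
    also have "\<dots> = \<phi> (z \<otimes> h) y0" using zh by simp
    also have "\<dots> = \<phi> z (\<phi> h y0)" using comp[OF zG hG y0(1)] by simp
    finally have "\<phi> h v = \<phi> z (\<phi> h y0)" .
    then have "cdist S v (\<phi> h v) = L" unfolding v_def
      using cdist_act[OF zG y0(1) act_V[OF hG y0(1)]] y0 by simp
    then have vD: "{v} \<in> Disp S K' (\<phi> h)" using vV K' unfolding Disp_def span_def verts_def by simp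
    have "z \<otimes> gr k = g" unfolding z_def using g gk by (simp add: m_assoc)
    then have "x = \<phi> z (\<phi> (gr k) a)" using xa comp[OF zG gk(1) aV] by simp
    then have "cdist S v x = cdist S y0 (\<phi> (gr k) a)" unfolding v_def
      using cdist_act[OF zG y0(1) act_V[OF gk(1) aV]] by simp
    also have "\<dots> \<le> C0" using C0 kP aR by blast
    finally have vx: "cdist S v x \<le> C0" .
    obtain p where p: "edge_path S p" "hd p = v" "last p = x" "length p = Suc (cdist S v x)"
      using cdist_ex[OF vV xV] by blast
    have "cdist S v y \<le> C0 + 1" if ys: "y \<in> s" for y
    proof -
      have yV: "y \<in> verts S" using ys sD by blast
      have "edge_path S (p @ [y])" using path_snoc[OF p(1) _ yV] pair_in[OF sS xs ys] p(3) by simp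
      moreover have "hd (p @ [y]) = v" using p unfolding edge_path_def by simp
      ultimately have "cdist S v y \<le> length (p @ [y]) - 1" using cdist_le[of "p @ [y]" v y] by simp
      then show ?thesis using p(4) vx by simp
    qed
    then have "s \<in> cball S (C0 + 1) v" using sS sD unfolding cball_def span_def by auto
    then show ?thesis using vD by blast
  qed
  show ?thesis
  proof (intro exI[of _ "C0 + 1"] conjI allI impI)
    fix K' assume "transl_length S (\<phi> h) \<le> K' \<and> K' \<le> K"
    then have K': "L \<le> K'" unfolding L_def by simp
    show "Disp S K (\<phi> h) \<subseteq> nbhd S (C0 + 1) (Disp S K' (\<phi> h))"
    proof
      fix s assume "s \<in> Disp S K (\<phi> h)"
      then obtain v where v: "v \<in> \<Union>(Disp S K' (\<phi> h))" "s \<in> cball S (C0 + 1) v"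
        using key[OF _ K'] by blast
      then show "s \<in> nbhd S (C0 + 1) (Disp S K' (\<phi> h))" unfolding nbhd_def by (rule UN_I)
    qed
  qed simp
qed

end

theorem lemma4p2:
  fixes G :: "('g, 'b) monoid_scheme" and \<phi> :: "'g \<Rightarrow> 'v \<Rightarrow> 'v"
    and S :: "'v set set" and h :: 'g and K :: nat
  assumes "systolic S"
    and "geometric_action G \<phi> S"
    and "h \<in> carrier G"
    and "hyperbolic S (\<phi> h)"
    and "transl_length S (\<phi> h) \<le> K"
  shows "\<exists>C::nat. C > 0 \<and> (\<forall>K'::nat. transl_length S (\<phi> h) \<le> K' \<and> K' \<le> K \<longrightarrow>
           Disp S K (\<phi> h) \<subseteq> nbhd S C (Disp S K' (\<phi> h)))"
proof -
  obtain F where F: "finite F" "F \<subseteq> S" "\<forall>s\<in>S. \<exists>g\<in>carrier G. \<exists>t\<in>F. s = \<phi> g ` t"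
    using assms(2) unfolding geometric_action_def by blast
  have ga: "group G" "group_action G (verts S) \<phi>"
    "\<forall>g\<in>carrier G. \<forall>s. s \<subseteq> verts S \<longrightarrow> (s \<in> S \<longleftrightarrow> \<phi> g ` s \<in> S)"
    "\<forall>v\<in>verts S. finite {g\<in>carrier G. \<phi> g v = v}"
    using assms(2) unfolding geometric_action_def by auto
  have sy: "simplicial_complex S" "connected_complex S"
    using assms(1) unfolding systolic_def simply_connected_complex_def by auto
  have "geo G \<phi> S F"
    unfolding geo_def geo_axioms_def
  proof (intro conjI)
    show "group G" by (rule ga(1))
    show "simplicial_complex S" by (rule sy(1))
    show "connected_complex S" by (rule sy(2))
    show "group_action G (verts S) \<phi>" by (rule ga(2))
    show "\<forall>g s. g \<in> carrier G \<longrightarrow> s \<subseteq> verts S \<longrightarrow> (s \<in> S) = (\<phi> g ` s \<in> S)" using ga(3) by blast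
    show "\<forall>v. v \<in> verts S \<longrightarrow> finite {g \<in> carrier G. \<phi> g v = v}" using ga(4) by blast
    show "finite F" by (rule F(1))
    show "F \<subseteq> S" by (rule F(2))
    show "\<forall>s. s \<in> S \<longrightarrow> (\<exists>g\<in>carrier G. \<exists>t\<in>F. s = \<phi> g ` t)" using F(3) by blast
  qed
  then show ?thesis by (rule geo.main) (rule assms(3))
qed

end
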